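(* Let $K$ be a field, let $L$ be a finite lattice, and let $R=H[L]=K[L]/I_L$. The following statements are equivalent: (1) $L$ is distributive; (2) the set of all poset ideals of $R$ forms a Koszul filtration of $R$; (3) $R$ admits a Koszul filtration in which every ideal is a poset ideal of $R$.
   Context: $K[L]$ denotes the polynomial ring over $K$ whose variables are the elements of $L$. For incomparable $a,b\in L$, the binomial $ab-(a\vee b)(a\wedge b)$ is called a basic binomial (Hibi relation); $I_L$ is the ideal of $K[L]$ generated by all basic binomials, and $H[L]=K[L]/I_L$. $H[L]$ is standard graded with $\deg(a)=1$ for each $a\in L$. A subset $J\subseteq L$ is a poset ideal of $L$ if $a\le b$ and $b\in J$ imply $a\in J$. For a poset ideal $J$ of $L$, $(\overline{J})$ denotes the ideal of $H[L]$ generated by the residue classes $\overline{a}=a+I_L$, $a\in J$; ideals of this form are called poset ideals of $H[L]$. For a standard graded $K$-algebra $R$ with maximal graded ideal $\mathfrak m$, a collection $\mathcal F$ of ideals of $R$ is a Koszul filtration if: (i) every ideal in $\mathcal F$ is generated by linear forms; (ii) $0$ and $\mathfrak m$ belong to $\mathcal F$; (iii) for every ideal $0\ne I\in\mathcal F$ there exists $J\in\mathcal F$ with $J\subset I$, $I/J$ cyclic, and $J:I\in\mathcal F$. *)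

theory Defs
  imports Main "HOL-Library.Multiset" "HOL-Library.Poly_Mapping"
begin

text \<open>The polynomial ring K[L]: finitely supported maps from monomials
  (finite multisets of lattice elements) to coefficients in K.\<close>
type_synonym ('a, 'k) lpoly = "'a multiset \<Rightarrow>\<^sub>0 'k"

definition var :: "'a \<Rightarrow> ('a, 'k::comm_ring_1) lpoly" where
  "var a = Poly_Mapping.single {#a#} 1"

definition gen_ideal :: "'r::comm_ring_1 set \<Rightarrow> 'r set" where
  "gen_ideal S = {f. \<exists>A c. finite A \<and> A \<subseteq> S \<and> f = (\<Sum>s\<in>A. c s * s)}"

definition linear_form :: "('a, 'k::comm_ring_1) lpoly \<Rightarrow> bool" where
  "linear_form f \<longleftrightarrow> (\<forall>m \<in> Poly_Mapping.keys f. size m = 1)"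

definition basic_binomials :: "('a::lattice, 'k::comm_ring_1) lpoly set" where
  "basic_binomials = {var a * var b - var (sup a b) * var (inf a b) | a b.
      \<not> a \<le> b \<and> \<not> b \<le> a}"

definition hibi_ideal :: "('a::lattice, 'k::comm_ring_1) lpoly set" where
  "hibi_ideal = gen_ideal basic_binomials"

text \<open>Ideals of R = H[L] = K[L]/I_L are represented by their preimages in K[L],
  i.e. ideals of K[L] containing I_L. The zero ideal of R is I_L itself; the
  ideal of R generated by residue classes of a set S is gen_ideal (I_L \<union> S);
  the colon ideal J :_R I corresponds to {f. \<forall>g\<in>I. f * g \<in> J}.\<close>

definition gen_R :: "('a::lattice, 'k::comm_ring_1) lpoly set \<Rightarrow> ('a, 'k) lpoly set" where
  "gen_R S = gen_ideal (hibi_ideal \<union> S)"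

definition max_ideal_R :: "('a::lattice, 'k::comm_ring_1) lpoly set" where
  "max_ideal_R = gen_R (range var)"

definition colon :: "'r::comm_ring_1 set \<Rightarrow> 'r set \<Rightarrow> 'r set" where
  "colon J I = {f. \<forall>g\<in>I. f * g \<in> J}"

definition koszul_filtration_R :: "('a::lattice, 'k::comm_ring_1) lpoly set set \<Rightarrow> bool" where
  "koszul_filtration_R F \<longleftrightarrow>
     (\<forall>I\<in>F. \<exists>S. (\<forall>f\<in>S. linear_form f) \<and> I = gen_R S) \<and>
     hibi_ideal \<in> F \<and> max_ideal_R \<in> F \<and>
     (\<forall>I\<in>F. I \<noteq> hibi_ideal \<longrightarrow>
        (\<exists>J\<in>F. J \<subseteq> I \<and> (\<exists>f. I = gen_R (J \<union> {f})) \<and> colon J I \<in> F))"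

definition poset_ideal :: "'a::order set \<Rightarrow> bool" where
  "poset_ideal J \<longleftrightarrow> (\<forall>a b. a \<le> b \<and> b \<in> J \<longrightarrow> a \<in> J)"

definition poset_ideal_R :: "('a::lattice, 'k::comm_ring_1) lpoly set \<Rightarrow> bool" where
  "poset_ideal_R I \<longleftrightarrow> (\<exists>J. poset_ideal J \<and> I = gen_R (var ` J))"

end

theory Submission
  imports Defs
begin



lemma lookup_mult_single:
  fixes c :: "('a multiset \<Rightarrow>\<^sub>0 'k::comm_ring_1)"
  shows "Poly_Mapping.lookup (c * Poly_Mapping.single n d) m = (if n \<subseteq># m then Poly_Mapping.lookup c (m - n) * d else 0)"
proof -
  have "Poly_Mapping.lookup (c * Poly_Mapping.single n d) m = (\<Sum>l. Poly_Mapping.lookup c l * (\<Sum>q. (d when n = q) when m = l + q))"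
    unfolding lookup_mult lookup_single ..
  also have "\<dots> = (\<Sum>l. Poly_Mapping.lookup c l * (d when m = l + n))"
  proof -
    have "(\<Sum>q. (d when n = q) when m = l + q) = (d when m = l + n)" for l
    proof -
      have "(\<lambda>q. (d when n = q) when m = l + q) = (\<lambda>q. (d when m = l + n) when n = q)"
        by (auto simp: when_def fun_eq_iff)
      then show ?thesis by (simp only: Sum_any_when_equal')
    qed
    then show ?thesis by simp
  qed
  also have "\<dots> = (\<Sum>l. (Poly_Mapping.lookup c l * d) when l = m - n \<and> n \<subseteq># m)"
    by (rule Sum_any.cong) (auto simp: when_def)
  also have "\<dots> = (if n \<subseteq># m then Poly_Mapping.lookup c (m - n) * d else 0)"
    by (auto simp: when_def)
  finally show ?thesis .
qed


definition idl :: "'r::comm_ring_1 set \<Rightarrow> bool" where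
  "idl T \<longleftrightarrow> 0 \<in> T \<and> (\<forall>x\<in>T. \<forall>y\<in>T. x + y \<in> T) \<and> (\<forall>r. \<forall>x\<in>T. r * x \<in> T)"

lemma idl_0: "idl T \<Longrightarrow> 0 \<in> T" by (simp add: idl_def)
lemma idl_add: "idl T \<Longrightarrow> x \<in> T \<Longrightarrow> y \<in> T \<Longrightarrow> x + y \<in> T" by (simp add: idl_def)
lemma idl_mult: "idl T \<Longrightarrow> x \<in> T \<Longrightarrow> r * x \<in> T" by (simp add: idl_def)
lemma idl_mult2: "idl T \<Longrightarrow> x \<in> T \<Longrightarrow> x * r \<in> T" by (simp add: idl_def mult.commute)
lemma idl_diff: "idl T \<Longrightarrow> x \<in> T \<Longrightarrow> y \<in> T \<Longrightarrow> x - y \<in> T"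
  using idl_add[of T x "(-1) * y"] idl_mult[of T y "-1"] by simp
lemma idl_sum: "idl T \<Longrightarrow> (\<And>i. i \<in> A \<Longrightarrow> f i \<in> T) \<Longrightarrow> sum f A \<in> T"
  by (induction A rule: infinite_finite_induct) (auto simp: idl_def)

lemma gen_ideal_memI: "finite A \<Longrightarrow> A \<subseteq> S \<Longrightarrow> f = (\<Sum>s\<in>A. c s * s) \<Longrightarrow> f \<in> gen_ideal S"
  unfolding gen_ideal_def by blast

lemma gen_ideal_memE: "f \<in> gen_ideal S \<Longrightarrow> (\<And>A c. finite A \<Longrightarrow> A \<subseteq> S \<Longrightarrow> f = (\<Sum>s\<in>A. c s * s) \<Longrightarrow> P) \<Longrightarrow> P"
  unfolding gen_ideal_def by blast

lemma gen_ideal_idl: "idl (gen_ideal S)"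
  unfolding idl_def
proof (intro conjI ballI allI)
  show "0 \<in> gen_ideal S" by (rule gen_ideal_memI[of "{}"]) auto
next
  fix x y assume hx: "x \<in> gen_ideal S" and hy: "y \<in> gen_ideal S"
  obtain A1 c1 where h1: "finite A1" "A1 \<subseteq> S" "x = (\<Sum>s\<in>A1. c1 s * s)" using hx by (rule gen_ideal_memE)
  obtain A2 c2 where h2: "finite A2" "A2 \<subseteq> S" "y = (\<Sum>s\<in>A2. c2 s * s)" using hy by (rule gen_ideal_memE)
  define c where "c s = (if s \<in> A1 then c1 s else 0) + (if s \<in> A2 then c2 s else 0)" for s
  have pw: "c s * s = (if s \<in> A1 then c1 s * s else 0) + (if s \<in> A2 then c2 s * s else 0)" for s
    unfolding c_def by (simp add: distrib_right)
  have "(\<Sum>s\<in>A1 \<union> A2. c s * s) = (\<Sum>s\<in>A1 \<union> A2. (if s \<in> A1 then c1 s * s else 0)) + (\<Sum>s\<in>A1 \<union> A2. (if s \<in> A2 then c2 s * s else 0))"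
    unfolding pw by (rule sum.distrib)
  also have e1: "(\<Sum>s\<in>A1 \<union> A2. (if s \<in> A1 then c1 s * s else 0)) = (\<Sum>s\<in>A1. c1 s * s)"
    by (rule sum.mono_neutral_cong_right) (use h1 h2 in auto)
  also have e2: "(\<Sum>s\<in>A1 \<union> A2. (if s \<in> A2 then c2 s * s else 0)) = (\<Sum>s\<in>A2. c2 s * s)"
    by (rule sum.mono_neutral_cong_right) (use h1 h2 in auto)
  finally have "x + y = (\<Sum>s\<in>A1 \<union> A2. c s * s)" using h1(3) h2(3) by simp
  then show "x + y \<in> gen_ideal S" by (rule gen_ideal_memI[rotated 2]) (use h1 h2 in auto)
next
  fix r x assume "x \<in> gen_ideal S"
  then obtain A c where h: "finite A" "A \<subseteq> S" "x = (\<Sum>s\<in>A. c s * s)" by (rule gen_ideal_memE)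
  then have "r * x = (\<Sum>s\<in>A. (r * c s) * s)" by (simp add: sum_distrib_left mult.assoc)
  then show "r * x \<in> gen_ideal S" by (rule gen_ideal_memI[rotated 2]) (use h in auto)
qed

lemma gen_ideal_sub: "S \<subseteq> gen_ideal S"
proof
  fix s assume "s \<in> S"
  then show "s \<in> gen_ideal S" unfolding gen_ideal_def
    by (intro CollectI exI[of _ "{s}"] exI[of _ "\<lambda>_. 1"]) auto
qed

lemma gen_ideal_least: "S \<subseteq> T \<Longrightarrow> idl T \<Longrightarrow> gen_ideal S \<subseteq> T"
proof
  fix f assume "S \<subseteq> T" "idl T" "f \<in> gen_ideal S"
  then obtain A c where h: "finite A" "A \<subseteq> S" "f = (\<Sum>s\<in>A. c s * s)" unfolding gen_ideal_def by auto
  show "f \<in> T" unfolding h(3) by (rule idl_sum[OF \<open>idl T\<close>]) (use h \<open>S \<subseteq> T\<close> \<open>idl T\<close> in \<open>auto intro: idl_mult\<close>)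
qed

lemma gen_ideal_mono: "S \<subseteq> T \<Longrightarrow> gen_ideal S \<subseteq> gen_ideal T"
  by (meson gen_ideal_idl gen_ideal_least gen_ideal_sub order_trans)

lemma gen_ideal_idem: "gen_ideal (gen_ideal S) = gen_ideal S"
  by (simp add: gen_ideal_idl gen_ideal_least gen_ideal_sub subset_antisym)

lemma gen_ideal_Un_gen: "gen_ideal (gen_ideal S \<union> T) = gen_ideal (S \<union> T)"
proof (rule subset_antisym)
  show "gen_ideal (gen_ideal S \<union> T) \<subseteq> gen_ideal (S \<union> T)"
    by (intro gen_ideal_least gen_ideal_idl Un_least)
      (auto intro: gen_ideal_mono[THEN subsetD] gen_ideal_sub[THEN subsetD])
  show "gen_ideal (S \<union> T) \<subseteq> gen_ideal (gen_ideal S \<union> T)"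
    by (intro gen_ideal_mono) (use gen_ideal_sub in auto)
qed

lemma gen_R_alt: "gen_R T = gen_ideal (basic_binomials \<union> T)"
  unfolding gen_R_def hibi_ideal_def by (rule gen_ideal_Un_gen)

lemma gen_R_idl: "idl (gen_R T)" by (simp add: gen_R_def gen_ideal_idl)
lemma gen_R_sub: "T \<subseteq> gen_R T" unfolding gen_R_def using gen_ideal_sub by blast
lemma hibi_sub_gen_R: "hibi_ideal \<subseteq> gen_R T" unfolding gen_R_def using gen_ideal_sub by blast
lemma gen_R_mono: "S \<subseteq> T \<Longrightarrow> gen_R S \<subseteq> gen_R T" unfolding gen_R_def by (intro gen_ideal_mono) auto
lemma gen_R_least: "T \<subseteq> I \<Longrightarrow> hibi_ideal \<subseteq> I \<Longrightarrow> idl I \<Longrightarrow> gen_R T \<subseteq> I"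
  unfolding gen_R_def by (intro gen_ideal_least) auto
lemma gen_R_hibi: "gen_R {} = hibi_ideal" unfolding gen_R_def hibi_ideal_def by (simp add: gen_ideal_idem)

definition lam :: "'a multiset set \<Rightarrow> ('a, 'k::comm_ring_1) lpoly \<Rightarrow> 'k" where
  "lam S h = (\<Sum>m\<in>S. Poly_Mapping.lookup h m)"

lemma lam_mult_single:
  assumes "finite S"
  shows "lam S (c * Poly_Mapping.single n d) = lam {r. r + n \<in> S} c * d"
proof -
  have "lam S (c * Poly_Mapping.single n d) = (\<Sum>m\<in>S. if n \<subseteq># m then Poly_Mapping.lookup c (m - n) * d else 0)"
    unfolding lam_def lookup_mult_single ..
  also have "\<dots> = (\<Sum>m\<in>{m\<in>S. n \<subseteq># m}. Poly_Mapping.lookup c (m - n) * d)"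
    using assms by (simp add: sum.inter_filter)
  also have "{m\<in>S. n \<subseteq># m} = (\<lambda>r. r + n) ` {r. r + n \<in> S}"
    by (auto simp: image_iff) (metis subset_mset.diff_add)
  also have "(\<Sum>m\<in>(\<lambda>r. r + n) ` {r. r + n \<in> S}. Poly_Mapping.lookup c (m - n) * d)
     = (\<Sum>r\<in>{r. r + n \<in> S}. Poly_Mapping.lookup c r * d)"
    by (subst sum.reindex) (auto simp: inj_on_def)
  finally show ?thesis by (simp add: lam_def sum_distrib_right)
qed

lemma lam_gen_ideal:
  assumes "finite S" "\<And>c s. s \<in> G \<Longrightarrow> lam S (c * s) = 0" "f \<in> gen_ideal G"
  shows "lam S f = (0::'k::comm_ring_1)"
proof -
  obtain A c where h: "finite A" "A \<subseteq> G" "f = (\<Sum>s\<in>A. c s * s)" using assms(3) unfolding gen_ideal_def by auto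
  have "lam S f = (\<Sum>s\<in>A. lam S (c s * s))"
    unfolding h(3) lam_def lookup_sum by (rule sum.swap)
  also have "\<dots> = 0" using h assms(2) by (auto intro: sum.neutral)
  finally show ?thesis .
qed

lemma var_mult: "var a * var b = Poly_Mapping.single {#a, b#} (1::'k::comm_ring_1)"
  by (simp add: var_def mult_single add_mset_commute)

lemma lam_diff: "lam S (x - y) = lam S x - lam S y"
  by (simp add: lam_def lookup_minus sum_subtractf)

definition bin :: "'a::lattice \<Rightarrow> 'a \<Rightarrow> ('a, 'k::comm_ring_1) lpoly" where
  "bin a b = var a * var b - var (sup a b) * var (inf a b)"

lemma lam_bin:
  assumes "finite S"
  shows "lam S (c * bin a b) = lam {r. r + {#a, b#} \<in> S} c - lam {r. r + {#sup a b, inf a b#} \<in> S} c"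
  unfolding bin_def var_mult right_diff_distrib lam_diff using assms
  by (simp add: lam_mult_single)

lemma lam_kill:
  fixes S :: "'a::lattice multiset set"
  assumes fin: "finite S"
    and H1: "\<And>a b r. \<not> a \<le> b \<Longrightarrow> \<not> b \<le> a \<Longrightarrow> (r + {#a, b#} \<in> S) = (r + {#sup a b, inf a b#} \<in> S)"
    and H2: "\<And>y r. y \<in> Y \<Longrightarrow> r + {#y#} \<notin> S"
    and f: "f \<in> gen_R (var ` Y)"
  shows "lam S (f :: ('a, 'k::comm_ring_1) lpoly) = 0"
proof (rule lam_gen_ideal[OF fin _ f[unfolded gen_R_alt]])
  fix c s :: "('a, 'k) lpoly" assume "s \<in> basic_binomials \<union> var ` Y"
  then consider a b where "s = bin a b" "\<not> a \<le> b" "\<not> b \<le> a" | y where "y \<in> Y" "s = var y"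
    unfolding basic_binomials_def bin_def by auto
  then show "lam S (c * s) = (0::'k)"
  proof cases
    case 1
    then show ?thesis using H1[OF 1(2,3)] by (simp add: lam_bin[OF fin])
  next
    case 2
    have "{r. r + {#y#} \<in> S} = {}" using H2[OF 2(1)] by auto
    then show ?thesis using 2 by (simp add: var_def lam_mult_single[OF fin] lam_def[of "{}"])
  qed
qed



lemma de_le: "sup (sup (inf x y) (inf y z)) (inf z x) \<le> inf (inf (sup x y) (sup y z)) (sup (z::'a::lattice) x)"
  by (smt (verit, ccfv_threshold) inf.boundedI inf.cobounded1 inf.cobounded2
    sup.commute sup.left_commute sup_idem sup_mono)

lemma meet_part:
  fixes x y z d e :: "'a::lattice"
  assumes modl: "\<And>a b c :: 'a. a \<le> c \<Longrightarrow> sup a (inf b c) = inf (sup a b) c"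
    and d: "d = sup (sup (inf x y) (inf y z)) (inf z x)"
    and e: "e = inf (inf (sup x y) (sup y z)) (sup z x)"
  shows "inf (sup d (inf x e)) (sup d (inf y e)) = d"
proof -
  have de: "d \<le> e" using de_le d e by simp
  have s1a: "sup d (inf (inf x e) (sup d (inf y e))) = inf (sup d (inf x e)) (sup d (inf y e))"
    using modl[where a=d and b="inf x e" and c="sup d (inf y e)"] by (simp only: sup_ge1 simp_thms)
  have s1: "inf (sup d (inf x e)) (sup d (inf y e)) = sup d (inf (inf x e) (sup d (inf y e)))"
    using s1a by (rule sym)
  have s2: "sup d (inf y e) = inf (sup d y) e" using modl[OF de, where b=y] by (simp add: sup_commute)
  have s3: "sup d y = sup y (inf z x)" using d
    by (metis (no_types, lifting) inf_commute sup_assoc sup_commute sup_inf_absorb)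
  have s4: "inf (inf x e) (inf (sup d y) e) = inf x (sup y (inf z x))" unfolding s3 using e
    by (smt (verit) inf_assoc inf_commute inf_sup_absorb sup_commute sup_inf_absorb sup_left_commute)
  have s5: "inf x (sup y (inf z x)) = sup (inf z x) (inf y x)"
    using modl[where a="inf z x" and b=y and c=x] by (simp add: inf_commute sup_commute)
  have s6: "sup (inf z x) (inf y x) \<le> d" using d by (simp add: inf_commute le_supI1 le_supI2)
  have s7: "inf (inf x e) (sup d (inf y e)) = sup (inf z x) (inf y x)" using s2 s4 s5 by simp
  show ?thesis unfolding s1 s7 using s6 by (simp add: sup_absorb1)
qed

lemma join_part:
  fixes x y z d e :: "'a::lattice"
  assumes modl: "\<And>a b c :: 'a. a \<le> c \<Longrightarrow> sup a (inf b c) = inf (sup a b) c"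
    and d: "d = sup (sup (inf x y) (inf y z)) (inf z x)"
    and e: "e = inf (inf (sup x y) (sup y z)) (sup z x)"
  shows "sup (sup d (inf x e)) (sup d (inf y e)) = e"
proof -
  have de: "d \<le> e" using de_le d e by simp
  have t1: "sup d (inf x e) = inf (sup d x) e" using modl[OF de, where b=x] by (simp add: sup_commute)
  have t2: "sup d (inf y e) = inf (sup d y) e" using modl[OF de, where b=y] by (simp add: sup_commute)
  have t3: "sup d y = sup y (inf z x)" using d
    by (metis (no_types, lifting) inf_commute sup_assoc sup_commute sup_inf_absorb)
  have t4: "sup d x = sup x (inf y z)" using d
    by (metis (no_types, lifting) inf_commute sup_assoc sup_commute sup_inf_absorb sup_left_commute)
  have t5: "inf (sup y (inf z x)) e = inf (sup y (inf z x)) (sup z x)" using e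
    by (smt (verit) distrib_sup_le inf.orderE inf_assoc inf_commute sup_commute)
  have t6: "inf (sup y (inf z x)) (sup z x) = sup (inf z x) (inf y (sup z x))"
  proof -
    have "inf z x \<le> sup z x" by (simp add: le_supI1)
    from modl[OF this, where b=y] show ?thesis by (metis sup_commute)
  qed
  have t7: "sup x (inf y (sup z x)) = inf (sup x y) (sup z x)"
    using modl[where a=x and b=y and c="sup z x"] by simp
  have "sup (inf (sup d x) e) (inf (sup d y) e) = inf (sup (inf (sup d y) e) (sup d x)) e"
    using modl[where a="inf (sup d y) e" and b="sup d x" and c=e] by (simp add: sup_commute)
  also have "sup (inf (sup d y) e) (sup d x) = sup (sup x (inf y (sup z x))) (sup (inf y z) (inf z x))"
    unfolding t3 t4 t5 t6 by (simp add: sup_aci)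
  also have "inf \<dots> e = e"
  proof -
    have "e \<le> sup x (inf y (sup z x))" unfolding t7 e by (simp add: le_infI1)
    then show ?thesis by (simp add: inf_absorb2 le_supI1)
  qed
  finally show ?thesis unfolding t1 t2 .
qed


lemma canc_modular:
  fixes a b c :: "'a::lattice"
  assumes canc: "\<And>a b c :: 'a. inf a b = inf c b \<Longrightarrow> sup a b = sup c b \<Longrightarrow> a = c"
    and ac: "a \<le> c"
  shows "sup a (inf b c) = inf (sup a b) c"
proof (rule canc[of _ b])
  have u1: "sup a (inf b c) \<le> c" using ac by simp
  have "inf (sup a (inf b c)) b = inf b c"
    by (rule order.antisym) (use u1 in \<open>auto intro: le_infI1 le_infI2 simp: le_inf_iff\<close>)
  moreover have "inf (inf (sup a b) c) b = inf b c"
    by (rule order.antisym) (auto intro: le_infI1 le_infI2 le_supI2 simp: le_inf_iff)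
  ultimately show "inf (sup a (inf b c)) b = inf (inf (sup a b) c) b" by simp
  have "sup (sup a (inf b c)) b = sup a b"
    by (rule order.antisym) (auto intro: le_supI1 le_supI2 le_infI1)
  moreover have "sup (inf (sup a b) c) b = sup a b"
    by (rule order.antisym) (use ac in \<open>auto intro: le_supI1 le_supI2 le_infI1 simp: le_sup_iff\<close>)
  ultimately show "sup (sup a (inf b c)) b = sup (inf (sup a b) c) b" by simp
qed

lemma canc_distrib:
  assumes canc: "\<And>a b c :: 'a::lattice. inf a b = inf c b \<Longrightarrow> sup a b = sup c b \<Longrightarrow> a = c"
  shows "class.distrib_lattice inf (\<le>) (<) (sup :: 'a \<Rightarrow> 'a \<Rightarrow> 'a)"
proof -
  have modl: "\<And>a b c :: 'a. a \<le> c \<Longrightarrow> sup a (inf b c) = inf (sup a b) c"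
  proof -
    fix a b c :: 'a assume "a \<le> c"
    show "sup a (inf b c) = inf (sup a b) c"
      apply (rule canc_modular)
       apply (rule canc; assumption)
      apply (rule \<open>a \<le> c\<close>)
      done
  qed
  have de: "sup (sup (inf x y) (inf y z)) (inf z x) = inf (inf (sup x y) (sup y z)) (sup z x)" for x y z :: 'a
  proof -
    define d where "d = sup (sup (inf x y) (inf y z)) (inf z x)"
    define e where "e = inf (inf (sup x y) (sup y z)) (sup z x)"
    have dp: "d = sup (sup (inf x z) (inf z y)) (inf y x)" "d = sup (sup (inf y z) (inf z x)) (inf x y)"
      unfolding d_def by (simp_all add: inf_commute sup_aci)
    have ep: "e = inf (inf (sup x z) (sup z y)) (sup y x)" "e = inf (inf (sup y z) (sup z x)) (sup x y)"
      unfolding e_def by (simp_all add: sup_commute inf_aci)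
    have m1: "inf (sup d (inf x e)) (sup d (inf z e)) = d" by (rule meet_part[OF modl dp(1) ep(1)])
    have m2: "inf (sup d (inf y e)) (sup d (inf z e)) = d" by (rule meet_part[OF modl dp(2) ep(2)])
    have j1: "sup (sup d (inf x e)) (sup d (inf z e)) = e" by (rule join_part[OF modl dp(1) ep(1)])
    have j2: "sup (sup d (inf y e)) (sup d (inf z e)) = e" by (rule join_part[OF modl dp(2) ep(2)])
    have eq: "sup d (inf x e) = sup d (inf y e)" by (rule canc[where b="sup d (inf z e)"]) (use m1 m2 j1 j2 in simp_all)
    have "inf (sup d (inf x e)) (sup d (inf y e)) = d" by (rule meet_part[OF modl d_def e_def])
    moreover have "sup (sup d (inf x e)) (sup d (inf y e)) = e" by (rule join_part[OF modl d_def e_def])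
    ultimately have "d = e" using eq by simp
    then show ?thesis unfolding d_def e_def .
  qed
  have "sup x (inf y z) = inf (sup x y) (sup x z)" for x y z :: 'a
  proof -
    have "sup x (inf y z) = sup x (sup (sup (inf x y) (inf y z)) (inf z x))"
      by (metis inf_sup_aci(1) sup.commute sup_assoc sup_inf_absorb)
    also have "\<dots> = sup x (inf (inf (sup x y) (sup y z)) (sup z x))" by (simp only: de[of x y z])
    also have "\<dots> = sup x (inf (sup y z) (inf (sup x y) (sup z x)))" by (simp add: inf_aci)
    also have "\<dots> = inf (sup x (sup y z)) (inf (sup x y) (sup z x))"
      by (rule modl) (simp add: le_infI1)
    also have "\<dots> = inf (sup x y) (sup x z)"
      by (metis inf.absorb2 inf_le1 inf_sup_aci(6) le_supI1 sup_commute)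
    finally show ?thesis .
  qed
  then have "class.distrib_lattice_axioms inf (sup :: 'a \<Rightarrow> 'a \<Rightarrow> 'a)"
    unfolding class.distrib_lattice_axioms_def by blast
  moreover have "class.lattice inf (\<le>) (<) (sup :: 'a \<Rightarrow> 'a \<Rightarrow> 'a)" by unfold_locales
  ultimately show ?thesis unfolding class.distrib_lattice_def by blast
qed



definition JP :: "'a::lattice \<Rightarrow> bool" where
  "JP p \<longleftrightarrow> (\<forall>a b. p \<le> sup a b \<longrightarrow> p \<le> a \<or> p \<le> b)"

lemma jp_sep:
  fixes a b :: "'a::{lattice, finite}"
  assumes D: "\<And>x y z::'a. inf x (sup y z) = sup (inf x y) (inf x z)"
    and "\<not> a \<le> b"
  shows "\<exists>p. JP p \<and> p \<le> a \<and> \<not> p \<le> b"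
  using assms(2)
proof (induction "card {z. z < a}" arbitrary: a rule: less_induct)
  case less
  show ?case
  proof (cases "JP a")
    case True then show ?thesis using less.prems by auto
  next
    case False
    then obtain c d where cd: "a \<le> sup c d" "\<not> a \<le> c" "\<not> a \<le> d" unfolding JP_def by auto
    have a_eq: "a = sup (inf a c) (inf a d)" using D[of a c d] cd(1) by (simp add: inf_absorb1)
    have lt1: "inf a c < a" using cd(2) by (metis inf.absorb_iff1 inf.cobounded1 inf.commute order.not_eq_order_implies_strict)
    have lt2: "inf a d < a" using cd(3) by (metis inf.absorb_iff1 inf.cobounded1 inf.commute order.not_eq_order_implies_strict)
    have cardlt: "card {z. z < w} < card {z. z < a}" if "w < a" for w
      by (rule psubset_card_mono) (use that in \<open>auto dest: order.strict_trans\<close>)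
    have "\<not> inf a c \<le> b \<or> \<not> inf a d \<le> b"
      using less.prems a_eq by (metis le_supI)
    then show ?thesis
    proof
      assume "\<not> inf a c \<le> b"
      from less.hyps[OF cardlt[OF lt1] this] show ?thesis using lt1 by (meson order.strict_implies_order order_trans)
    next
      assume "\<not> inf a d \<le> b"
      from less.hyps[OF cardlt[OF lt2] this] show ?thesis using lt2 by (meson order.strict_implies_order order_trans)
    qed
  qed
qed

lemma jp_eq:
  fixes a b :: "'a::{lattice, finite}"
  assumes D: "\<And>x y z::'a. inf x (sup y z) = sup (inf x y) (inf x z)"
    and "\<And>p. JP p \<Longrightarrow> p \<le> a \<longleftrightarrow> p \<le> b"
  shows "a = b"
  using jp_sep[OF D, of a b] jp_sep[OF D, of b a] assms(2) by (meson order.antisym)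

definition rk :: "'a::lattice \<Rightarrow> nat" where "rk z = card {p. JP p \<and> p \<le> z}"

lemma rk_strict:
  fixes a b :: "'a::{lattice, finite}"
  assumes D: "\<And>x y z::'a. inf x (sup y z) = sup (inf x y) (inf x z)"
    and "a < b"
  shows "rk a < rk b"
proof -
  have "\<not> b \<le> a" using assms(2) by (simp add: less_le_not_le)
  then obtain p where p: "JP p" "p \<le> b" "\<not> p \<le> a" using jp_sep[OF D, of b a] by auto
  have "{p. JP p \<and> p \<le> a} \<subset> {p. JP p \<and> p \<le> b}"
  proof
    show "{p. JP p \<and> p \<le> a} \<subseteq> {p. JP p \<and> p \<le> b}" using assms(2) by (auto intro: order.trans less_imp_le)
    show "{p. JP p \<and> p \<le> a} \<noteq> {p. JP p \<and> p \<le> b}" using p by blast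
  qed
  then show ?thesis unfolding rk_def by (rule psubset_card_mono[rotated]) simp
qed

lemma rk_val:
  fixes a b :: "'a::{lattice, finite}"
  shows "rk (sup a b) + rk (inf a b) = rk a + rk b"
proof -
  have jp: "JP p \<Longrightarrow> p \<le> sup a b \<longleftrightarrow> p \<le> a \<or> p \<le> b" for p
    unfolding JP_def by (meson le_supI1 le_supI2)
  have e1: "{p. JP p \<and> p \<le> sup a b} = {p. JP p \<and> p \<le> a} \<union> {p. JP p \<and> p \<le> b}"
    using jp by blast
  have e2: "{p. JP p \<and> p \<le> inf a b} = {p. JP p \<and> p \<le> a} \<inter> {p. JP p \<and> p \<le> b}"
    by auto
  have "card ({p. JP p \<and> p \<le> a} \<union> {p. JP p \<and> p \<le> b}) + card ({p. JP p \<and> p \<le> a} \<inter> {p. JP p \<and> p \<le> b})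
      = card {p. JP p \<and> p \<le> a} + card {p. JP p \<and> p \<le> b}"
    by (rule card_Un_Int[symmetric]) auto
  then show ?thesis unfolding rk_def e1 e2 .
qed

definition cnt :: "'a::order \<Rightarrow> 'a multiset \<Rightarrow> nat" where
  "cnt p m = size (filter_mset (\<lambda>z. p \<le> z) m)"

lemma cnt_add: "cnt p (m + n) = cnt p m + cnt p n" by (simp add: cnt_def)
lemma cnt_add_mset: "cnt p (add_mset z m) = cnt p m + (if p \<le> z then 1 else 0)" by (simp add: cnt_def)
lemma cnt_single: "cnt p {#z#} = (if p \<le> z then 1 else 0)" by (simp add: cnt_def)
lemma cnt_swap:
  assumes "JP p"
  shows "cnt p {#a, b#} = cnt p {#sup a b, inf (a::'a::lattice) b#}"
proof -
  have "p \<le> sup a b \<longleftrightarrow> p \<le> a \<or> p \<le> b" using assms unfolding JP_def by (meson le_supI1 le_supI2)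
  then show ?thesis by (simp add: cnt_def)
qed

definition chain :: "'a::order multiset \<Rightarrow> bool" where
  "chain m \<longleftrightarrow> (\<forall>u\<in>#m. \<forall>v\<in>#m. u \<le> v \<or> v \<le> u)"

lemma chain_top:
  assumes "chain m" "m \<noteq> {#}"
  shows "\<exists>c\<in>#m. \<forall>z\<in>#m. z \<le> c"
proof -
  obtain c where c: "c \<in> set_mset m" "\<forall>b\<in>set_mset m. c \<le> b \<longrightarrow> c = b"
    using finite_has_maximal[of "set_mset m"] assms(2) by auto
  have "\<forall>z\<in>#m. z \<le> c"
  proof
    fix z assume "z \<in># m"
    then have "z \<le> c \<or> c \<le> z" using assms(1) c(1) unfolding chain_def by blast
    then show "z \<le> c" using c(2) \<open>z \<in># m\<close> by auto
  qed
  then show ?thesis using c(1) by auto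
qed

lemma chain_sub: "chain m \<Longrightarrow> n \<subseteq># m \<Longrightarrow> chain n"
  unfolding chain_def by (meson mset_subset_eqD)

lemma chain_unique:
  fixes m1 m2 :: "'a::{lattice, finite} multiset"
  assumes D: "\<And>x y z::'a. inf x (sup y z) = sup (inf x y) (inf x z)"
  shows "chain m1 \<Longrightarrow> chain m2 \<Longrightarrow> size m1 = size m2 \<Longrightarrow> (\<And>p. JP p \<Longrightarrow> cnt p m1 = cnt p m2) \<Longrightarrow> m1 = m2"
proof (induction "size m1" arbitrary: m1 m2)
  case 0
  then show ?case by simp
next
  case (Suc k)
  then have ne: "m1 \<noteq> {#}" "m2 \<noteq> {#}" by auto
  obtain c where c: "c \<in># m1" "\<forall>z\<in>#m1. z \<le> c" using chain_top[OF Suc.prems(1) ne(1)] by auto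
  obtain d where d: "d \<in># m2" "\<forall>z\<in>#m2. z \<le> d" using chain_top[OF Suc.prems(2) ne(2)] by auto
  have pos: "cnt p m \<noteq> 0 \<longleftrightarrow> p \<le> t" if "t \<in># m" "\<forall>z\<in>#m. z \<le> t" for p t and m :: "'a multiset"
  proof -
    have "cnt p m \<noteq> 0 \<longleftrightarrow> (\<exists>z\<in>#m. p \<le> z)" unfolding cnt_def
      by (auto simp: size_eq_0_iff_empty)
    then show ?thesis using that by (meson order.trans)
  qed
  have "c = d"
  proof (rule jp_eq[OF D])
    fix p :: 'a assume "JP p"
    show "p \<le> c \<longleftrightarrow> p \<le> d" using pos[OF c, of p] pos[OF d, of p] Suc.prems(4)[OF \<open>JP p\<close>] by simp
  qed
  define n1 where "n1 = m1 - {#c#}"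
  define n2 where "n2 = m2 - {#c#}"
  have e1: "m1 = n1 + {#c#}" unfolding n1_def using c(1) by simp
  have e2: "m2 = n2 + {#c#}" unfolding n2_def using d(1) \<open>c = d\<close> by simp
  have "n1 = n2"
  proof (rule Suc.hyps)
    show "k = size n1" using Suc.hyps(2) e1 by simp
    show "chain n1" using chain_sub[OF Suc.prems(1)] unfolding n1_def by simp
    show "chain n2" using chain_sub[OF Suc.prems(2)] unfolding n2_def by simp
    show "size n1 = size n2" using Suc.prems(3) e1 e2 by simp
    fix p :: 'a assume "JP p"
    then show "cnt p n1 = cnt p n2" using Suc.prems(4)[of p] e1 e2 by (simp add: cnt_add_mset)
  qed
  then show ?case using e1 e2 by simp
qed




lemma sq_ineq:
  fixes A B U V :: nat
  assumes "A + B = U + V" "U < A" "V < A"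
  shows "U^2 + V^2 < A^2 + B^2"
proof -
  have b: "int B = int U + int V - int A" using assms(1) by linarith
  have "int A^2 + int B^2 - int U^2 - int V^2 = 2 * (int A - int U) * (int A - int V)"
    unfolding b by (simp add: algebra_simps power2_eq_square)
  moreover have "0 < 2 * (int A - int U) * (int A - int V)" using assms(2,3) by simp
  ultimately have "int (U^2 + V^2) < int (A^2 + B^2)" by simp
  then show ?thesis by linarith
qed

definition phi :: "'a::lattice multiset \<Rightarrow> nat" where
  "phi m = sum_mset (image_mset (\<lambda>z. rk z ^ 2) m)"

lemma phi_add: "phi (m + n) = phi m + phi n" by (simp add: phi_def)
lemma phi_pair: "phi {#a, b#} = rk a ^ 2 + rk b ^ 2" by (simp add: phi_def)

lemma rk_le: "rk (z::'a::{lattice,finite}) \<le> card (UNIV :: 'a set)"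
  unfolding rk_def by (rule card_mono) auto

lemma phi_bound: "phi (m :: 'a::{lattice,finite} multiset) \<le> size m * card (UNIV :: 'a set) ^ 2"
proof (induction m)
  case empty then show ?case by (simp add: phi_def)
next
  case (add x m)
  have "rk x ^ 2 \<le> card (UNIV :: 'a set) ^ 2" using rk_le[of x] by (simp add: power_mono)
  from add_mono[OF this add.IH] show ?case by (simp add: phi_def)
qed

lemma straighten:
  fixes m :: "'a::{lattice,finite} multiset"
  assumes D: "\<And>x y z::'a. inf x (sup y z) = sup (inf x y) (inf x z)"
  shows "\<exists>m'. chain m' \<and> size m' = size m \<and>
     Poly_Mapping.single m (1::'k::comm_ring_1) - Poly_Mapping.single m' 1 \<in> hibi_ideal"
proof (induction "size m * card (UNIV :: 'a set) ^ 2 - phi m" arbitrary: m rule: less_induct)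
  case less
  have hid: "idl (hibi_ideal :: ('a, 'k) lpoly set)" unfolding hibi_ideal_def by (rule gen_ideal_idl)
  show ?case
  proof (cases "chain m")
    case True
    then show ?thesis using idl_0[OF hid] by (intro exI[of _ m]) auto
  next
    case False
    then obtain u v where uv: "u \<in># m" "v \<in># m" "\<not> u \<le> v" "\<not> v \<le> u" unfolding chain_def by blast
    then have "u \<noteq> v" by auto
    obtain m1 where m1: "m = add_mset u m1" using uv(1) by (metis multi_member_split)
    have "v \<in># m1" using uv(2) m1 \<open>u \<noteq> v\<close> by auto
    then obtain r0 where r0: "m1 = add_mset v r0" by (metis multi_member_split)
    have meq: "m = r0 + {#u, v#}" using m1 r0 by simp
    define m2 where "m2 = r0 + {#sup u v, inf u v#}"
    have bin_in: "bin u v \<in> (hibi_ideal :: ('a, 'k) lpoly set)"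
      unfolding hibi_ideal_def
      by (rule gen_ideal_sub[THEN subsetD]) (use uv(3,4) in \<open>auto simp: basic_binomials_def bin_def\<close>)
    have diff: "Poly_Mapping.single m (1::'k) - Poly_Mapping.single m2 1 = Poly_Mapping.single r0 1 * bin u v"
      unfolding bin_def var_mult meq m2_def by (simp add: right_diff_distrib mult_single)
    have d1: "Poly_Mapping.single m (1::'k) - Poly_Mapping.single m2 1 \<in> hibi_ideal"
      unfolding diff by (rule idl_mult[OF hid bin_in])
    have su: "u < sup u v" "v < sup u v" using uv(3,4) by (auto simp: less_le_not_le)
    have "rk u ^ 2 + rk v ^ 2 < rk (sup u v) ^ 2 + rk (inf u v) ^ 2"
      by (rule sq_ineq) (use rk_val[of u v] rk_strict[OF D su(1)] rk_strict[OF D su(2)] in auto)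
    then have "phi m < phi m2" unfolding meq m2_def phi_add phi_pair by simp
    moreover have "size m2 = size m" unfolding meq m2_def by simp
    moreover have "phi m2 \<le> size m2 * card (UNIV :: 'a set) ^ 2" by (rule phi_bound)
    ultimately have lt: "size m2 * card (UNIV :: 'a set) ^ 2 - phi m2 < size m * card (UNIV :: 'a set) ^ 2 - phi m"
    proof -
      assume a: "phi m < phi m2" "size m2 = size m" "phi m2 \<le> size m2 * card (UNIV :: 'a set) ^ 2"
      define K where "K = size m * card (UNIV :: 'a set) ^ 2"
      have "phi m2 \<le> K" using a unfolding K_def by simp
      then have "K - phi m2 < K - phi m" using a(1) by linarith
      then show ?thesis unfolding K_def a(2) .
    qed
    obtain m' where m': "chain m'" "size m' = size m2"
      "Poly_Mapping.single m2 (1::'k) - Poly_Mapping.single m' 1 \<in> hibi_ideal"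
      using less.hyps[OF lt] by blast
    have "Poly_Mapping.single m (1::'k) - Poly_Mapping.single m' 1 =
      (Poly_Mapping.single m 1 - Poly_Mapping.single m2 1) + (Poly_Mapping.single m2 1 - Poly_Mapping.single m' 1)"
      by simp
    then have "Poly_Mapping.single m (1::'k) - Poly_Mapping.single m' 1 \<in> hibi_ideal"
      using idl_add[OF hid d1 m'(3)] by simp
    then show ?thesis using m' \<open>size m2 = size m\<close> by auto
  qed
qed



lemma poly_expand: "g = (\<Sum>m\<in>Poly_Mapping.keys g. Poly_Mapping.single m (Poly_Mapping.lookup g m))"
proof (rule poly_mapping_eqI)
  fix k
  have "Poly_Mapping.lookup (\<Sum>m\<in>Poly_Mapping.keys g. Poly_Mapping.single m (Poly_Mapping.lookup g m)) k
      = (\<Sum>m\<in>Poly_Mapping.keys g. if m = k then Poly_Mapping.lookup g m else 0)"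
    by (simp add: lookup_sum lookup_single when_def)
  also have "\<dots> = Poly_Mapping.lookup g k"
    by (simp add: in_keys_iff)
  finally show "Poly_Mapping.lookup g k = Poly_Mapping.lookup (\<Sum>m\<in>Poly_Mapping.keys g. Poly_Mapping.single m (Poly_Mapping.lookup g m)) k" by simp
qed

lemma single_scale: "Poly_Mapping.single m c = Poly_Mapping.single 0 c * Poly_Mapping.single m (1::'k::comm_ring_1)"
  by (simp add: mult_single)

lemma keys_sum_sub: "Poly_Mapping.keys (sum f A) \<subseteq> (\<Union>i\<in>A. Poly_Mapping.keys (f i))"
  by (induction A rule: infinite_finite_induct) (auto dest: keys_add[THEN subsetD])

lemma cnt_empty: "cnt p {#} = 0" by (simp add: cnt_def)

lemma nzd:
  fixes x :: "'a::{lattice,finite}" and g :: "('a, 'k::comm_ring_1) lpoly"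
  assumes D: "\<And>x y z::'a. inf x (sup y z) = sup (inf x y) (inf x z)"
    and xg: "var x * g \<in> gen_R (var ` {y. \<not> x \<le> y})"
  shows "g \<in> gen_R (var ` {y. \<not> x \<le> y})"
proof -
  define Y where "Y = {y. \<not> x \<le> y}"
  define Q where "Q = (gen_R (var ` Y) :: ('a, 'k) lpoly set)"
  define U where "U = {z. x \<le> z}"
  have Qi: "idl Q" unfolding Q_def by (rule gen_R_idl)
  have hQ: "hibi_ideal \<subseteq> Q" unfolding Q_def by (rule hibi_sub_gen_R)
  have hid: "idl (hibi_ideal :: ('a, 'k) lpoly set)" unfolding hibi_ideal_def by (rule gen_ideal_idl)
  define ch where "ch m = (SOME m'. chain m' \<and> size m' = size m \<and>
     Poly_Mapping.single m (1::'k) - Poly_Mapping.single m' 1 \<in> hibi_ideal)" for m :: "'a multiset"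
  have ch: "chain (ch m) \<and> size (ch m) = size m \<and>
     Poly_Mapping.single m (1::'k) - Poly_Mapping.single (ch m) 1 \<in> hibi_ideal" for m
    unfolding ch_def by (rule someI_ex) (rule straighten[OF D])
  define K where "K = Poly_Mapping.keys g"
  define P where "P = {m. set_mset (ch m) \<subseteq> U}"
  define t where "t m = Poly_Mapping.single (ch m) (Poly_Mapping.lookup g m)" for m
  define g1 where "g1 = (\<Sum>m\<in>K \<inter> P. t m)"
  define g2 where "g2 = (\<Sum>m\<in>K - P. t m)"
  have fK: "finite K" unfolding K_def by simp
  have g0: "(\<Sum>m\<in>K. t m) = g1 + g2" unfolding g1_def g2_def by (rule sum.Int_Diff[OF fK])
  have gexp: "g = (\<Sum>m\<in>K. Poly_Mapping.single m (Poly_Mapping.lookup g m))" unfolding K_def by (rule poly_expand)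
  have tm_eq: "Poly_Mapping.single m (Poly_Mapping.lookup g m) - t m = Poly_Mapping.single 0 (Poly_Mapping.lookup g m) *
      (Poly_Mapping.single m 1 - Poly_Mapping.single (ch m) 1)" for m
    unfolding t_def right_diff_distrib mult_single by simp
  have "g - (\<Sum>m\<in>K. t m) = (\<Sum>m\<in>K. Poly_Mapping.single m (Poly_Mapping.lookup g m) - t m)"
    unfolding sum_subtractf by (rule arg_cong[where f="\<lambda>h. h - (\<Sum>m\<in>K. t m)"], rule gexp)
  also have "\<dots> = (\<Sum>m\<in>K. Poly_Mapping.single 0 (Poly_Mapping.lookup g m) *
      (Poly_Mapping.single m 1 - Poly_Mapping.single (ch m) 1))"
    by (simp only: tm_eq)
  also have "\<dots> \<in> hibi_ideal"
  proof (rule idl_sum[OF hid])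
    fix m show "Poly_Mapping.single 0 (Poly_Mapping.lookup g m) * (Poly_Mapping.single m 1 - Poly_Mapping.single (ch m) 1) \<in> hibi_ideal"
      by (rule idl_mult[OF hid]) (use ch[of m] in blast)
  qed
  finally have a1: "g - (\<Sum>m\<in>K. t m) \<in> Q" using hQ by auto
  have a2: "g2 \<in> Q" unfolding g2_def
  proof (rule idl_sum[OF Qi])
    fix m assume "m \<in> K - P"
    then have "\<not> set_mset (ch m) \<subseteq> U" unfolding P_def by simp
    then obtain y where y: "y \<in># ch m" "\<not> x \<le> y" unfolding U_def by auto
    have "ch m - {#y#} + {#y#} = ch m" using y(1) by simp
    then have e: "t m = Poly_Mapping.single (ch m - {#y#}) (Poly_Mapping.lookup g m) * var y"
      unfolding t_def var_def mult_single by simp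
    have "var y \<in> var ` Y" unfolding Y_def using y(2) by simp
    then have "var y \<in> Q" unfolding Q_def by (rule gen_R_sub[THEN subsetD])
    then have "Poly_Mapping.single (ch m - {#y#}) (Poly_Mapping.lookup g m) * var y \<in> Q" by (rule idl_mult[OF Qi])
    then show "t m \<in> Q" unfolding e .
  qed
  have gg1: "g - g1 \<in> Q"
  proof -
    have eq: "g - g1 = (g - (\<Sum>m\<in>K. t m)) + g2" using g0 by (simp add: algebra_simps)
    show ?thesis unfolding eq by (rule idl_add[OF Qi a1 a2])
  qed
  have xg1: "g1 * var x \<in> Q"
  proof -
    have "g1 * var x = var x * g - var x * (g - g1)" by (simp add: algebra_simps)
    moreover have "var x * g \<in> Q" using xg unfolding Q_def Y_def .
    moreover have "var x * (g - g1) \<in> Q" by (rule idl_mult[OF Qi gg1])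
    ultimately show ?thesis using idl_diff[OF Qi] by simp
  qed
  have keys_g1: "Poly_Mapping.keys g1 \<subseteq> {ch m | m. m \<in> P}"
  proof -
    have "Poly_Mapping.keys g1 \<subseteq> (\<Union>m\<in>K \<inter> P. Poly_Mapping.keys (t m))" unfolding g1_def by (rule keys_sum_sub)
    also have "\<dots> \<subseteq> {ch m | m. m \<in> P}" unfolding t_def by auto
    finally show ?thesis .
  qed
  have "g1 = 0"
  proof (rule poly_mapping_eqI, rule ccontr)
    fix m0 assume ne: "Poly_Mapping.lookup g1 m0 \<noteq> Poly_Mapping.lookup 0 m0"
    then have "m0 \<in> Poly_Mapping.keys g1" by (simp add: in_keys_iff)
    then obtain mm where mm: "m0 = ch mm" "mm \<in> P" using keys_g1 by auto
    have m0c: "chain m0" and m0U: "set_mset m0 \<subseteq> U" using ch[of mm] mm unfolding P_def by auto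
    define S where "S = {m \<in> multisets_of_size U (size m0 + 1). \<forall>p. JP p \<longrightarrow> cnt p m = cnt p m0 + cnt p {#x#}}"
    have fS: "finite S" unfolding S_def by (rule finite_subset[OF _ finite_multisets_of_size[of U]]) auto
    have "lam S (g1 * var x) = 0"
    proof (rule lam_kill[OF fS _ _ xg1[unfolded Q_def]])
      fix a b :: 'a and r assume ab: "\<not> a \<le> b" "\<not> b \<le> a"
      have u: "(x \<le> a \<and> x \<le> b) \<longleftrightarrow> (x \<le> sup a b \<and> x \<le> inf a b)" by (auto intro: le_supI1)
      have cs: "cnt p (add_mset a (add_mset b r)) = cnt p (add_mset (sup a b) (add_mset (inf a b) r))" if "JP p" for p
        using cnt_swap[OF that, of a b] by (simp add: cnt_add_mset)
      show "(r + {#a, b#} \<in> S) = (r + {#sup a b, inf a b#} \<in> S)"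
        unfolding S_def multisets_of_size_def using u cs
        by (auto simp: U_def)
    next
      fix y r assume "y \<in> Y"
      then show "r + {#y#} \<notin> S" unfolding S_def multisets_of_size_def U_def Y_def by auto
    qed
    moreover have "lam S (g1 * var x) = lam {r. r + {#x#} \<in> S} g1"
      unfolding var_def lam_mult_single[OF fS] by simp
    moreover have "lam {r. r + {#x#} \<in> S} g1 = Poly_Mapping.lookup g1 m0"
    proof -
      define T where "T = {r. r + {#x#} \<in> S}"
      have m0T: "m0 \<in> T" unfolding T_def S_def multisets_of_size_def using m0U by (auto simp: U_def cnt_add cnt_add_mset cnt_single cnt_empty)
      have fT: "finite T" unfolding T_def
        by (rule finite_subset[OF _ finite_multisets_of_size[of UNIV "size m0"]]) (auto simp: S_def multisets_of_size_def)
      have z: "Poly_Mapping.lookup g1 r = 0" if "r \<in> T - {m0}" for r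
      proof (rule ccontr)
        assume "Poly_Mapping.lookup g1 r \<noteq> 0"
        then have "r \<in> Poly_Mapping.keys g1" by (simp add: in_keys_iff)
        then obtain mr where mr: "r = ch mr" "mr \<in> P" using keys_g1 by auto
        have rc: "chain r" using ch[of mr] mr by auto
        have rT: "r + {#x#} \<in> S" using that unfolding T_def by auto
        have "r = m0"
        proof (rule chain_unique[OF D rc m0c])
          show "size r = size m0" using rT unfolding S_def multisets_of_size_def by auto
          fix p :: 'a assume "JP p"
          then have "cnt p (r + {#x#}) = cnt p m0 + cnt p {#x#}" using rT unfolding S_def by blast
          then show "cnt p r = cnt p m0" by (simp only: cnt_add)
        qed
        then show False using that by auto
      qed
      have "lam T g1 = Poly_Mapping.lookup g1 m0 + (\<Sum>r\<in>T - {m0}. Poly_Mapping.lookup g1 r)"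
        unfolding lam_def using fT m0T by (simp add: sum.remove)
      also have "(\<Sum>r\<in>T - {m0}. Poly_Mapping.lookup g1 r) = 0" using z by simp
      finally show ?thesis unfolding T_def by simp
    qed
    ultimately show False using ne by simp
  qed
  then show ?thesis using gg1 unfolding Q_def Y_def by simp
qed



lemma lam_single: "finite S \<Longrightarrow> lam S (Poly_Mapping.single n (1::'k::comm_ring_1)) = (if n \<in> S then 1 else 0)"
  unfolding lam_def by (simp add: lookup_single when_def)

lemma lam_var: "lam {{#z#}} h = Poly_Mapping.lookup h {#z#}" by (simp add: lam_def)

lemma var_in_genR:
  assumes "var z \<in> (gen_R (var ` A) :: ('a::lattice, 'k::field) lpoly set)"
  shows "z \<in> A"
proof (rule ccontr)
  assume zA: "z \<notin> A"
  have "lam {{#z#}} (var z :: ('a, 'k) lpoly) = 0"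
  proof (rule lam_kill[OF _ _ _ assms])
    fix a b :: 'a and r show "(r + {#a, b#} \<in> {{#z#}}) = (r + {#sup a b, inf a b#} \<in> {{#z#}})"
      by (auto dest: arg_cong[of _ _ size])
  next
    fix y r assume "y \<in> A" then show "r + {#y#} \<notin> {{#z#}}" using zA by (auto simp: add_mset_eq_single)
  qed simp
  moreover have "lam {{#z#}} (var z :: ('a, 'k) lpoly) = 1" by (simp add: lam_var var_def)
  ultimately show False by simp
qed

lemma one_notin: "(1 :: ('a::lattice, 'k::field) lpoly) \<notin> gen_R (var ` A)"
proof
  assume h: "(1 :: ('a, 'k) lpoly) \<in> gen_R (var ` A)"
  have "lam {{#}} (1 :: ('a, 'k) lpoly) = 0"
    by (rule lam_kill[OF _ _ _ h]) auto
  moreover have "lam {{#}} (1 :: ('a, 'k) lpoly) = 1" by (simp add: lam_def)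
  ultimately show False by simp
qed

lemma const_zero:
  assumes "f \<in> (gen_R (var ` A) :: ('a::lattice, 'k::field) lpoly set)"
  shows "Poly_Mapping.lookup f {#} = 0"
proof -
  have "lam {{#}} f = 0" by (rule lam_kill[OF _ _ _ assms]) auto
  then show ?thesis by (simp add: lam_def)
qed

lemma poset_ideal_R_rep:
  assumes "poset_ideal_R (I :: ('a::lattice, 'k::field) lpoly set)"
  shows "I = gen_R (var ` {z. var z \<in> I})" "poset_ideal {z. var z \<in> I}"
proof -
  obtain J where J: "poset_ideal J" "I = gen_R (var ` J)" using assms unfolding poset_ideal_R_def by auto
  have "{z. var z \<in> I} = J"
  proof
    show "{z. var z \<in> I} \<subseteq> J" using var_in_genR J(2) by auto
    show "J \<subseteq> {z. var z \<in> I}"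
    proof
      fix x assume "x \<in> J"
      then have "var x \<in> var ` J" by simp
      then have "var x \<in> I" unfolding J(2) by (rule gen_R_sub[THEN subsetD])
      then show "x \<in> {z. var z \<in> I}" by simp
    qed
  qed
  then show "I = gen_R (var ` {z. var z \<in> I})" "poset_ideal {z. var z \<in> I}" using J by auto
qed

lemma colon_idl: "idl J \<Longrightarrow> idl (colon J I)"
  unfolding idl_def colon_def by (auto simp: distrib_right mult.assoc)

lemma genR_cyc:
  assumes J: "idl J" "hibi_ideal \<subseteq> J" and h: "h \<in> gen_R (J \<union> {f})"
  shows "\<exists>j\<in>J. \<exists>r. h = j + r * f"
proof -
  define T where "T = {h. \<exists>j\<in>J. \<exists>r. h = j + r * f}"
  have "idl T" unfolding idl_def T_def
  proof (intro conjI ballI allI)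
    show "0 \<in> {h. \<exists>j\<in>J. \<exists>r. h = j + r * f}" using idl_0[OF J(1)] by (intro CollectI bexI[of _ 0] exI[of _ 0]) auto
  next
    fix x y assume "x \<in> {h. \<exists>j\<in>J. \<exists>r. h = j + r * f}" "y \<in> {h. \<exists>j\<in>J. \<exists>r. h = j + r * f}"
    then obtain j1 r1 j2 r2 where "j1 \<in> J" "x = j1 + r1 * f" "j2 \<in> J" "y = j2 + r2 * f" by auto
    then show "x + y \<in> {h. \<exists>j\<in>J. \<exists>r. h = j + r * f}" using idl_add[OF J(1)]
      by (intro CollectI bexI[of _ "j1 + j2"] exI[of _ "r1 + r2"]) (auto simp: algebra_simps)
  next
    fix s x assume "x \<in> {h. \<exists>j\<in>J. \<exists>r. h = j + r * f}"
    then obtain j r where "j \<in> J" "x = j + r * f" by auto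
    then show "s * x \<in> {h. \<exists>j\<in>J. \<exists>r. h = j + r * f}" using idl_mult[OF J(1)]
      by (intro CollectI bexI[of _ "s * j"] exI[of _ "s * r"]) (auto simp: algebra_simps)
  qed
  moreover have "J \<union> {f} \<subseteq> T" unfolding T_def
  proof
    fix x assume "x \<in> J \<union> {f}"
    then show "x \<in> {h. \<exists>j\<in>J. \<exists>r. h = j + r * f}"
    proof
      assume "x \<in> J" then show ?thesis by (intro CollectI bexI[of _ x] exI[of _ 0]) auto
    next
      assume "x \<in> {f}" then show ?thesis using idl_0[OF J(1)] by (intro CollectI bexI[of _ 0] exI[of _ 1]) auto
    qed
  qed
  ultimately have "gen_R (J \<union> {f}) \<subseteq> T"
    by (intro gen_R_least) (use J(2) in \<open>auto simp: T_def\<close>)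
  then show ?thesis using h unfolding T_def by auto
qed

lemma sub_single_ne: "n \<subseteq># {#z#} \<Longrightarrow> n \<noteq> {#} \<Longrightarrow> n = {#z#}"
  by (simp add: nonempty_subseteq_mset_eq_single)

lemma lookup_mult_lin:
  fixes r f :: "('a, 'k::comm_ring_1) lpoly"
  assumes "Poly_Mapping.lookup f {#} = 0"
  shows "Poly_Mapping.lookup (r * f) {#z#} = Poly_Mapping.lookup r {#} * Poly_Mapping.lookup f {#z#}"
proof -
  have "r * f = (\<Sum>n\<in>Poly_Mapping.keys f. r * Poly_Mapping.single n (Poly_Mapping.lookup f n))"
    by (subst poly_expand[of f]) (simp add: sum_distrib_left)
  then have "Poly_Mapping.lookup (r * f) {#z#} =
     (\<Sum>n\<in>Poly_Mapping.keys f. if n \<subseteq># {#z#} then Poly_Mapping.lookup r ({#z#} - n) * Poly_Mapping.lookup f n else 0)"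
    by (simp add: lookup_sum lookup_mult_single)
  also have "\<dots> = (\<Sum>n\<in>Poly_Mapping.keys f. if n = {#z#} then Poly_Mapping.lookup r {#} * Poly_Mapping.lookup f n else 0)"
  proof (rule sum.cong[OF refl])
    fix n assume "n \<in> Poly_Mapping.keys f"
    then have "n \<noteq> {#}" using assms by (auto simp: in_keys_iff)
    then show "(if n \<subseteq># {#z#} then Poly_Mapping.lookup r ({#z#} - n) * Poly_Mapping.lookup f n else 0) =
      (if n = {#z#} then Poly_Mapping.lookup r {#} * Poly_Mapping.lookup f n else 0)"
      using sub_single_ne[of n z] by auto
  qed
  also have "\<dots> = Poly_Mapping.lookup r {#} * Poly_Mapping.lookup f {#z#}"
    by (simp add: in_keys_iff)
  finally show ?thesis .
qed


lemma var_linear: "linear_form (var a :: ('a, 'k::field) lpoly)"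
  unfolding linear_form_def var_def by simp

lemma dist_koszul:
  assumes D: "\<And>x y z::'a::{lattice,finite}. inf x (sup y z) = sup (inf x y) (inf x z)"
  shows "koszul_filtration_R ({I. poset_ideal_R I} :: ('a, 'k::field) lpoly set set)"
  unfolding koszul_filtration_R_def
proof (intro conjI ballI impI)
  fix I :: "('a, 'k) lpoly set" assume "I \<in> {I. poset_ideal_R I}"
  then obtain A where "I = gen_R (var ` A)" unfolding poset_ideal_R_def by auto
  then show "\<exists>S. (\<forall>f\<in>S. linear_form f) \<and> I = gen_R S" using var_linear by (intro exI[of _ "var ` A"]) auto
next
  show "hibi_ideal \<in> ({I. poset_ideal_R I} :: ('a, 'k) lpoly set set)"
    unfolding poset_ideal_R_def poset_ideal_def
    by (intro CollectI exI[of _ "{}"]) (simp add: gen_R_hibi)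
next
  show "max_ideal_R \<in> ({I. poset_ideal_R I} :: ('a, 'k) lpoly set set)"
    unfolding poset_ideal_R_def poset_ideal_def max_ideal_R_def
    by (intro CollectI exI[of _ UNIV]) simp
next
  fix I :: "('a, 'k) lpoly set"
  assume "I \<in> {I. poset_ideal_R I}" and nz: "I \<noteq> hibi_ideal"
  then obtain A where A: "poset_ideal A" "I = gen_R (var ` A)" unfolding poset_ideal_R_def by auto
  have "A \<noteq> {}"
  proof
    assume "A = {}"
    then have "I = gen_R {}" using A(2) by simp
    moreover have "gen_R {} = (hibi_ideal :: ('a, 'k) lpoly set)" by (rule gen_R_hibi)
    ultimately show False using nz by simp
  qed
  moreover have "finite A" by simp
  ultimately obtain x where x: "x \<in> A" "\<forall>b\<in>A. x \<le> b \<longrightarrow> x = b" using finite_has_maximal[of A] by blast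
  define B where "B = A - {x}"
  define Y where "Y = {y. \<not> x \<le> y}"
  have pB: "poset_ideal B" unfolding poset_ideal_def
  proof (intro allI impI)
    fix a b assume ab: "a \<le> b \<and> b \<in> B"
    then have "a \<in> A" using A(1) unfolding poset_ideal_def B_def by blast
    moreover have "a \<noteq> x"
    proof
      assume "a = x"
      then have "x \<le> b" "b \<in> A" "b \<noteq> x" using ab unfolding B_def by auto
      then show False using x(2) by auto
    qed
    ultimately show "a \<in> B" unfolding B_def by simp
  qed
  have pY: "poset_ideal Y" unfolding poset_ideal_def Y_def mem_Collect_eq by (meson order.trans)
  define J where "J = (gen_R (var ` B) :: ('a, 'k) lpoly set)"
  have Ji: "idl J" unfolding J_def by (rule gen_R_idl)
  have hJ: "hibi_ideal \<subseteq> J" unfolding J_def by (rule hibi_sub_gen_R)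
  have varJ: "var z \<in> J" if "z \<in> B" for z
  proof -
    have "var z \<in> var ` B" using that by simp
    then show ?thesis unfolding J_def by (rule gen_R_sub[THEN subsetD])
  qed
  have varI: "var z \<in> I" if "z \<in> A" for z
  proof -
    have "var z \<in> var ` A" using that by simp
    then show ?thesis unfolding A(2) by (rule gen_R_sub[THEN subsetD])
  qed
  have JI: "J \<subseteq> I" unfolding J_def A(2) by (rule gen_R_mono) (auto simp: B_def)
  have IJ: "I = gen_R (J \<union> {var x})"
  proof -
    have "gen_R (J \<union> {var x}) = gen_ideal (gen_ideal (hibi_ideal \<union> var ` B) \<union> (hibi_ideal \<union> {var x}))"
      unfolding gen_R_def J_def by (rule arg_cong[where f=gen_ideal]) auto
    also have "\<dots> = gen_ideal ((hibi_ideal \<union> var ` B) \<union> (hibi_ideal \<union> {var x}))" by (rule gen_ideal_Un_gen)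
    also have "(hibi_ideal \<union> var ` B) \<union> (hibi_ideal \<union> {var x}) = hibi_ideal \<union> var ` A"
      using x(1) unfolding B_def by auto
    finally show ?thesis unfolding A(2) gen_R_def by simp
  qed
  have col: "colon J I = gen_R (var ` Y)"
  proof
    show "gen_R (var ` Y) \<subseteq> colon J I"
    proof (rule gen_R_least)
      show "idl (colon J I)" by (rule colon_idl[OF Ji])
      show "hibi_ideal \<subseteq> colon J I"
      proof
        fix h :: "('a, 'k) lpoly" assume h: "h \<in> hibi_ideal"
        have hid: "idl (hibi_ideal :: ('a, 'k) lpoly set)" unfolding hibi_ideal_def by (rule gen_ideal_idl)
        show "h \<in> colon J I" unfolding colon_def
        proof (intro CollectI ballI)
          fix g show "h * g \<in> J" using hJ idl_mult2[OF hid h, of g] by auto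
        qed
      qed
      show "var ` Y \<subseteq> colon J I"
      proof
        fix v :: "('a, 'k) lpoly" assume "v \<in> var ` Y"
        then obtain y where y: "y \<in> Y" "v = var y" by auto
        define T where "T = {g. var y * g \<in> J}"
        have Ti: "idl T" unfolding T_def idl_def using Ji
          by (auto simp: distrib_left idl_0 idl_add idl_mult mult.left_commute)
        have "I \<subseteq> T" unfolding A(2)
        proof (rule gen_R_least[OF _ _ Ti])
          show "hibi_ideal \<subseteq> T"
          proof
            fix h :: "('a, 'k) lpoly" assume h: "h \<in> hibi_ideal"
            have hid: "idl (hibi_ideal :: ('a, 'k) lpoly set)" unfolding hibi_ideal_def by (rule gen_ideal_idl)
            show "h \<in> T" unfolding T_def using hJ idl_mult[OF hid h, of "var y"] by auto
          qed
          show "var ` A \<subseteq> T"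
          proof
            fix w :: "('a, 'k) lpoly" assume "w \<in> var ` A"
            then obtain z where z: "z \<in> A" "w = var z" by auto
            show "w \<in> T"
            proof (cases "z = x")
              case False
              then have "z \<in> B" using z unfolding B_def by auto
              then show ?thesis unfolding T_def z(2) using idl_mult[OF Ji varJ] by simp
            next
              case True
              show ?thesis
              proof (cases "y \<le> x")
                case True
                then have "y \<in> B" using y(1) x(1) A(1) unfolding Y_def B_def poset_ideal_def by auto
                then show ?thesis unfolding T_def z(2) \<open>z = x\<close> using idl_mult2[OF Ji varJ] by simp
              next
                case False
                have nxy: "\<not> x \<le> y" using y(1) unfolding Y_def by simp
                have "inf y x \<in> B"
                proof -
                  have "inf y x \<in> A" using A(1) x(1) unfolding poset_ideal_def by (meson inf.cobounded2)
                  moreover have "inf y x \<noteq> x" using nxy by (metis inf.cobounded1)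
                  ultimately show ?thesis unfolding B_def by simp
                qed
                have bb: "bin y x \<in> J"
                proof -
                  have "bin y x \<in> basic_binomials" unfolding basic_binomials_def bin_def using False nxy by auto
                  then have "bin y x \<in> hibi_ideal" unfolding hibi_ideal_def by (rule gen_ideal_sub[THEN subsetD])
                  then show ?thesis using hJ by auto
                qed
                have eq: "var y * var x = bin y x + var (sup y x) * var (inf y x)" unfolding bin_def by simp
                have "var (sup y x) * var (inf y x) \<in> J" by (rule idl_mult[OF Ji varJ[OF \<open>inf y x \<in> B\<close>]])
                then have "var y * var x \<in> J" unfolding eq by (rule idl_add[OF Ji bb])
                then show ?thesis unfolding T_def z(2) \<open>z = x\<close> by simp
              qed
            qed
          qed
        qed
        then show "v \<in> colon J I" unfolding colon_def T_def y(2) by auto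
      qed
    qed
    show "colon J I \<subseteq> gen_R (var ` Y)"
    proof
      fix f assume "f \<in> colon J I"
      then have "f * var x \<in> J" unfolding colon_def using varI[OF x(1)] by auto
      moreover have "J \<subseteq> gen_R (var ` Y)" unfolding J_def
        by (rule gen_R_mono) (use x in \<open>auto simp: B_def Y_def\<close>)
      ultimately have "var x * f \<in> gen_R (var ` {y. \<not> x \<le> y})" unfolding Y_def by (auto simp: mult.commute)
      then show "f \<in> gen_R (var ` Y)" unfolding Y_def by (rule nzd[OF D])
    qed
  qed
  show "\<exists>J\<in>{I. poset_ideal_R I}. J \<subseteq> I \<and> (\<exists>f. I = gen_R (J \<union> {f})) \<and> colon J I \<in> {I. poset_ideal_R I}"
  proof (intro bexI conjI)
    show "J \<subseteq> I" by (rule JI)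
    show "\<exists>f. I = gen_R (J \<union> {f})" using IJ by blast
    show "colon J I \<in> {I. poset_ideal_R I}" unfolding col poset_ideal_R_def using pY by auto
    show "J \<in> {I. poset_ideal_R I}" unfolding J_def poset_ideal_R_def using pB by auto
  qed
qed


lemma pair_eq_meet_join:
  assumes "{#p, q#} = {#u, v#}"
  shows "inf p q = inf u (v::'a::lattice) \<and> sup p q = sup u v"
  using assms by (auto simp: add_eq_conv_ex add_mset_eq_single inf_commute sup_commute)

lemma canc_inc1: "inf a b = inf c b \<Longrightarrow> sup a b = sup c b \<Longrightarrow> a \<noteq> c \<Longrightarrow> \<not> (a::'a::lattice) \<le> b"
  by (metis inf.order_iff sup.absorb_iff2)
lemma canc_inc2: "inf a b = inf c b \<Longrightarrow> sup a b = sup c b \<Longrightarrow> a \<noteq> c \<Longrightarrow> \<not> (b::'a::lattice) \<le> a"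
  by (metis inf.absorb_iff2 sup.order_iff)

lemma koszul_canc:
  fixes F :: "('a::{lattice,finite}, 'k::field) lpoly set set" and a b c :: 'a
  assumes K: "koszul_filtration_R F" and PF: "\<forall>I\<in>F. poset_ideal_R I"
    and m: "inf a b = inf c b" and j: "sup a b = sup c b"
  shows "a = c"
proof (rule ccontr)
  assume ac: "a \<noteq> c"
  have nab: "\<not> a \<le> b" by (rule canc_inc1[OF m j ac])
  have nba: "\<not> b \<le> a" by (rule canc_inc2[OF m j ac])
  have ncb: "\<not> c \<le> b" by (rule canc_inc1[OF m[symmetric] j[symmetric]]) (use ac in auto)
  have nbc: "\<not> b \<le> c" by (rule canc_inc2[OF m[symmetric] j[symmetric]]) (use ac in auto)
  define ob where "ob = inf a b"
  define i where "i = sup a b"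
  have oa: "ob \<le> a" unfolding ob_def by simp
  have ai1: "a \<le> i" unfolding i_def by simp
  have ai2: "c \<le> i" unfolding i_def j by simp
  have ai: "a \<le> i" "c \<le> i" using ai1 ai2 by auto
  define Aof where "Aof I = {z. var z \<in> I}" for I :: "('a, 'k) lpoly set"
  have FI: "I = gen_R (var ` Aof I)" "poset_ideal (Aof I)" if "I \<in> F" for I
    using poset_ideal_R_rep[of I] PF that unfolding Aof_def by auto
  have hid: "idl (hibi_ideal :: ('a, 'k) lpoly set)" unfolding hibi_ideal_def by (rule gen_ideal_idl)
  define G where "G = {I\<in>F. ob \<in> Aof I}"
  have maxG: "max_ideal_R \<in> G"
  proof -
    have "var ob \<in> (range var :: ('a, 'k) lpoly set)" by simp
    then have "var ob \<in> (max_ideal_R :: ('a, 'k) lpoly set)" unfolding max_ideal_R_def by (rule gen_R_sub[THEN subsetD])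
    then show ?thesis using K unfolding G_def Aof_def koszul_filtration_R_def by auto
  qed
  obtain I where I: "I \<in> G" and Imin: "\<And>I'. I' \<in> G \<Longrightarrow> card (Aof I) \<le> card (Aof I')"
    using ex_has_least_nat[of "\<lambda>I. I \<in> G" max_ideal_R "\<lambda>I. card (Aof I)"] maxG by blast
  have IF: "I \<in> F" and oI: "ob \<in> Aof I" using I unfolding G_def by auto
  define AI where "AI = Aof I"
  have Ieq: "I = gen_R (var ` AI)" and pAI: "poset_ideal AI" using FI[OF IF] unfolding AI_def by auto
  have "I \<noteq> hibi_ideal"
  proof
    assume "I = hibi_ideal"
    moreover have "var ob \<in> I" using oI unfolding Aof_def by simp
    moreover have "gen_R (var ` {}) = (hibi_ideal :: ('a, 'k) lpoly set)" by (simp add: gen_R_hibi)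
    ultimately have "var ob \<in> (gen_R (var ` {}) :: ('a, 'k) lpoly set)" by simp
    then show False using var_in_genR by fastforce
  qed
  then obtain J f where JF: "J \<in> F" and JI: "J \<subseteq> I" and If: "I = gen_R (J \<union> {f})" and cF: "colon J I \<in> F"
    using K IF unfolding koszul_filtration_R_def by blast
  define AJ where "AJ = Aof J"
  have Jeq: "J = gen_R (var ` AJ)" and pAJ: "poset_ideal AJ" using FI[OF JF] unfolding AJ_def by auto
  have Ji: "idl J" unfolding Jeq by (rule gen_R_idl)
  have hJ: "hibi_ideal \<subseteq> J" unfolding Jeq by (rule hibi_sub_gen_R)
  have varJ: "var z \<in> J" if "z \<in> AJ" for z using that unfolding AJ_def Aof_def by simp
  have varI: "var z \<in> I" if "z \<in> AI" for z using that unfolding AI_def Aof_def by simp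
  have "J \<noteq> I"
  proof
    assume "J = I"
    then have "1 \<in> colon J I" unfolding colon_def by simp
    moreover have "colon J I = gen_R (var ` Aof (colon J I))" by (rule FI(1)[OF cF])
    ultimately show False using one_notin by metis
  qed
  have AJI: "AJ \<subseteq> AI" using JI unfolding AJ_def AI_def Aof_def by auto
  have "AJ \<noteq> AI" using \<open>J \<noteq> I\<close> Ieq Jeq by auto
  then have "card AJ < card AI" using AJI by (intro psubset_card_mono) auto
  have oJ: "ob \<notin> AJ"
  proof
    assume "ob \<in> AJ"
    then have "J \<in> G" using JF unfolding G_def AJ_def by auto
    then show False using Imin[of J] \<open>card AJ < card AI\<close> unfolding AJ_def AI_def by simp
  qed
  have f0: "Poly_Mapping.lookup f {#} = 0"
  proof -
    have "f \<in> I" unfolding If by (rule gen_R_sub[THEN subsetD]) simp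
    then show ?thesis unfolding Ieq by (rule const_zero)
  qed
  have lamJ: "Poly_Mapping.lookup h {#z#} = 0" if "h \<in> J" "z \<notin> AJ" for h z
  proof -
    have "lam {{#z#}} h = 0"
    proof (rule lam_kill[OF _ _ _ that(1)[unfolded Jeq]])
      fix a b :: 'a and r show "(r + {#a, b#} \<in> {{#z#}}) = (r + {#sup a b, inf a b#} \<in> {{#z#}})"
        by (auto dest: arg_cong[of _ _ size])
    next
      fix y r assume "y \<in> AJ" then show "r + {#y#} \<notin> {{#z#}}" using that(2) by (auto simp: add_mset_eq_single)
    qed simp
    then show ?thesis by (simp add: lam_var)
  qed
  have coef: "Poly_Mapping.lookup (var z :: ('a, 'k) lpoly) {#w#} = Poly_Mapping.lookup r {#} * Poly_Mapping.lookup f {#w#}"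
    if "var z = j + r * f" "j \<in> J" "w \<notin> AJ" for z w j r
  proof -
    have "Poly_Mapping.lookup (var z :: ('a, 'k) lpoly) {#w#} = Poly_Mapping.lookup j {#w#} + Poly_Mapping.lookup (r * f) {#w#}"
      unfolding that(1) by (simp add: lookup_add)
    then show ?thesis using lamJ[OF that(2,3)] lookup_mult_lin[OF f0] by simp
  qed
  have AIeq: "AI \<subseteq> insert ob AJ"
  proof
    fix z assume zI: "z \<in> AI"
    show "z \<in> insert ob AJ"
    proof (rule ccontr)
      assume "z \<notin> insert ob AJ"
      then have zo: "z \<noteq> ob" and zJ: "z \<notin> AJ" by auto
      obtain j1 r1 where j1: "j1 \<in> J" "var z = j1 + r1 * f"
        using genR_cyc[OF Ji hJ varI[OF zI, unfolded If]] by blast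
      obtain j2 r2 where j2: "j2 \<in> J" "var ob = j2 + r2 * f"
        using genR_cyc[OF Ji hJ varI[OF oI[folded AI_def], unfolded If]] by blast
      have e1: "1 = Poly_Mapping.lookup r1 {#} * Poly_Mapping.lookup f {#z#}"
        using coef[OF j1(2) j1(1) zJ] by (simp add: var_def)
      have e2: "0 = Poly_Mapping.lookup r1 {#} * Poly_Mapping.lookup f {#ob#}"
        using coef[OF j1(2) j1(1) oJ] zo by (simp add: var_def lookup_single)
      have e3: "1 = Poly_Mapping.lookup r2 {#} * Poly_Mapping.lookup f {#ob#}"
        using coef[OF j2(2) j2(1) oJ] by (simp add: var_def)
      have "Poly_Mapping.lookup r1 {#} \<noteq> 0" using e1 by auto
      then have "Poly_Mapping.lookup f {#ob#} = 0" using e2 by simp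
      then show False using e3 by simp
    qed
  qed
  define g where "g = (var i * (var a - var c) :: ('a, 'k) lpoly)"
  have bab: "bin a b \<in> (hibi_ideal :: ('a, 'k) lpoly set)" unfolding hibi_ideal_def
    by (rule gen_ideal_sub[THEN subsetD]) (use nab nba in \<open>auto simp: basic_binomials_def bin_def\<close>)
  have bcb: "bin c b \<in> (hibi_ideal :: ('a, 'k) lpoly set)" unfolding hibi_ideal_def
    by (rule gen_ideal_sub[THEN subsetD]) (use ncb nbc in \<open>auto simp: basic_binomials_def bin_def\<close>)
  have go: "g * var ob \<in> J"
  proof -
    have "g * var ob = var c * bin a b - var a * bin c b"
      unfolding g_def bin_def ob_def i_def using m j by (simp add: algebra_simps)
    also have "\<dots> \<in> hibi_ideal" by (rule idl_diff[OF hid idl_mult[OF hid bab] idl_mult[OF hid bcb]])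
    finally show ?thesis using hJ by auto
  qed
  have gcol: "g \<in> colon J I"
  proof -
    define T where "T = {h. g * h \<in> J}"
    have Ti: "idl T" unfolding T_def idl_def using Ji
      by (auto simp: distrib_left idl_0 idl_add idl_mult mult.left_commute)
    have "I \<subseteq> T" unfolding Ieq
    proof (rule gen_R_least[OF _ _ Ti])
      show "hibi_ideal \<subseteq> T"
      proof
        fix h :: "('a, 'k) lpoly" assume h: "h \<in> hibi_ideal"
        show "h \<in> T" unfolding T_def using hJ idl_mult[OF hid h, of g] by auto
      qed
      show "var ` AI \<subseteq> T"
      proof
        fix w :: "('a, 'k) lpoly" assume "w \<in> var ` AI"
        then obtain z where z: "z \<in> AI" "w = var z" by auto
        then have "z = ob \<or> z \<in> AJ" using AIeq by auto
        then show "w \<in> T"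
        proof
          assume "z = ob" then show ?thesis unfolding T_def z(2) using go by simp
        next
          assume "z \<in> AJ" then show ?thesis unfolding T_def z(2) using idl_mult[OF Ji varJ[OF \<open>z \<in> AJ\<close>], of g] by simp
        qed
      qed
    qed
    then show ?thesis unfolding colon_def T_def by auto
  qed
  define C where "C = Aof (colon J I)"
  have Ceq: "colon J I = gen_R (var ` C)" unfolding C_def by (rule FI(1)[OF cF])
  have CY: "C \<subseteq> {y. \<not> ob \<le> y}"
  proof
    fix y assume yC: "y \<in> C"
    show "y \<in> {y. \<not> ob \<le> y}"
    proof (rule ccontr)
      assume "y \<notin> {y. \<not> ob \<le> y}"
      then have oy: "ob \<le> y" by simp
      have "var y \<in> colon J I" using yC unfolding C_def Aof_def by simp
      then have yo: "var y * var ob \<in> J" unfolding colon_def using varI[OF oI[folded AI_def]] by auto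
      define S2 where "S2 = multisets_of_size {z. ob \<le> z} 2"
      have fS2: "finite S2" unfolding S2_def by (rule finite_multisets_of_size) simp
      have "lam S2 (var y * var ob :: ('a, 'k) lpoly) = 0"
      proof (rule lam_kill[OF fS2 _ _ yo[unfolded Jeq]])
        fix a' b' :: 'a and r assume "\<not> a' \<le> b'" "\<not> b' \<le> a'"
        have u: "(ob \<le> a' \<and> ob \<le> b') \<longleftrightarrow> (ob \<le> sup a' b' \<and> ob \<le> inf a' b')" by (auto intro: le_supI1)
        show "(r + {#a', b'#} \<in> S2) = (r + {#sup a' b', inf a' b'#} \<in> S2)"
          unfolding S2_def multisets_of_size_def using u by auto
      next
        fix y' r assume "y' \<in> AJ"
        then have "\<not> ob \<le> y'" using pAJ oJ unfolding poset_ideal_def by blast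
        then show "r + {#y'#} \<notin> S2" unfolding S2_def multisets_of_size_def by auto
      qed
      moreover have "lam S2 (var y * var ob :: ('a, 'k) lpoly) = 1"
        unfolding var_mult using fS2 oy by (simp add: lam_single S2_def multisets_of_size_def)
      ultimately show False by simp
    qed
  qed
  have gY: "g \<in> gen_R (var ` {y. \<not> ob \<le> y})"
    using gcol Ceq gen_R_mono[of "var ` C" "var ` {y. \<not> ob \<le> y}"] CY by auto
  define S3 where "S3 = (\<lambda>(u, v). {#u, v#}) ` {(u, v). inf u v = a \<and> sup u v = i}"
  have fS3: "finite S3" unfolding S3_def by simp
  have "lam S3 g = 0"
  proof (rule lam_kill[OF fS3 _ _ gY])
    fix a' b' :: 'a and r assume "\<not> a' \<le> b'" "\<not> b' \<le> a'"
    have sz: "r = {#}" if "r + {#p, q#} \<in> S3" for p q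
    proof -
      from that obtain u v where "r + {#p, q#} = {#u, v#}" unfolding S3_def by auto
      then have "size (r + {#p, q#}) = size {#u, v#}" by (rule arg_cong)
      then show ?thesis by simp
    qed
    have mem: "{#p, q#} \<in> S3 \<longleftrightarrow> inf p q = a \<and> sup p q = i" for p q
    proof
      assume "{#p, q#} \<in> S3"
      then obtain u v where "{#p, q#} = {#u, v#}" "inf u v = a" "sup u v = i" unfolding S3_def by auto
      then show "inf p q = a \<and> sup p q = i" using pair_eq_meet_join by metis
    next
      assume "inf p q = a \<and> sup p q = i"
      then show "{#p, q#} \<in> S3" unfolding S3_def by (auto intro: image_eqI[of _ _ "(p, q)"])
    qed
    have sj: "inf (sup a' b') (inf a' b') = inf a' b'" "sup (sup a' b') (inf a' b') = sup a' b'"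
      by (simp_all add: inf_absorb2 sup_absorb1 le_supI1)
    show "(r + {#a', b'#} \<in> S3) = (r + {#sup a' b', inf a' b'#} \<in> S3)"
    proof
      assume h: "r + {#a', b'#} \<in> S3"
      then have "r = {#}" by (rule sz)
      then show "r + {#sup a' b', inf a' b'#} \<in> S3" using h mem sj by simp
    next
      assume h: "r + {#sup a' b', inf a' b'#} \<in> S3"
      then have "r = {#}" by (rule sz)
      then show "r + {#a', b'#} \<in> S3" using h mem sj by simp
    qed
  next
    fix y r assume "y \<in> {y. \<not> ob \<le> y}"
    then have ny: "\<not> ob \<le> y" by simp
    show "r + {#y#} \<notin> S3"
    proof
      assume "r + {#y#} \<in> S3"
      then obtain u v where uv: "r + {#y#} = {#u, v#}" "inf u v = a" unfolding S3_def by auto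
      have "y \<in># r + {#y#}" by simp
      then have "y \<in># {#u, v#}" unfolding uv(1) .
      then have "y = u \<or> y = v" by auto
      then have "a \<le> y" using uv(2) by (auto intro: le_infI1 le_infI2)
      then show False using ny oa by (meson order.trans)
    qed
  qed
  moreover have "lam S3 g = 1"
  proof -
    have gs: "g = Poly_Mapping.single {#i, a#} 1 - Poly_Mapping.single {#i, c#} 1"
      unfolding g_def right_diff_distrib var_mult ..
    have in1: "{#i, a#} \<in> S3" unfolding S3_def
      using ai by (intro image_eqI[of _ _ "(a, i)"]) (auto simp: add_mset_commute inf_absorb1 sup_absorb2)
    have in2: "{#i, c#} \<notin> S3"
    proof
      assume "{#i, c#} \<in> S3"
      then obtain u v where "{#i, c#} = {#u, v#}" "inf u v = a" unfolding S3_def by auto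
      then have "inf i c = a" using pair_eq_meet_join by metis
      then show False using ai(2) ac by (simp add: inf_absorb2)
    qed
    show ?thesis unfolding gs lam_diff using in1 in2 fS3 by (simp add: lam_single)
  qed
  ultimately show False by simp
qed

theorem theorem2p1:
  fixes L_type :: "'a::{lattice, finite} itself" and K_type :: "'k::field itself"
  shows "(class.distrib_lattice (inf :: 'a \<Rightarrow> 'a \<Rightarrow> 'a) (\<le>) (<) sup
           \<longleftrightarrow> koszul_filtration_R ({I. poset_ideal_R I} :: ('a, 'k) lpoly set set))
       \<and> (koszul_filtration_R ({I. poset_ideal_R I} :: ('a, 'k) lpoly set set)
           \<longleftrightarrow> (\<exists>F :: ('a, 'k) lpoly set set. koszul_filtration_R F \<and> (\<forall>I\<in>F. poset_ideal_R I)))"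
proof -
  have DP: "koszul_filtration_R ({I. poset_ideal_R I} :: ('a, 'k) lpoly set set)"
    if "class.distrib_lattice (inf :: 'a \<Rightarrow> 'a \<Rightarrow> 'a) (\<le>) (<) sup"
  proof -
    interpret DL: distrib_lattice "inf :: 'a \<Rightarrow> 'a \<Rightarrow> 'a" "(\<le>)" "(<)" sup by (rule that)
    show ?thesis by (rule dist_koszul) (rule DL.inf_sup_distrib1)
  qed
  have PE: "\<exists>F :: ('a, 'k) lpoly set set. koszul_filtration_R F \<and> (\<forall>I\<in>F. poset_ideal_R I)"
    if "koszul_filtration_R ({I. poset_ideal_R I} :: ('a, 'k) lpoly set set)"
    using that by (intro exI[of _ "{I. poset_ideal_R I}"]) auto
  have ED: "class.distrib_lattice (inf :: 'a \<Rightarrow> 'a \<Rightarrow> 'a) (\<le>) (<) sup"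
    if E: "\<exists>F :: ('a, 'k) lpoly set set. koszul_filtration_R F \<and> (\<forall>I\<in>F. poset_ideal_R I)"
  proof -
    obtain F :: "('a, 'k) lpoly set set" where F: "koszul_filtration_R F" "\<forall>I\<in>F. poset_ideal_R I" using E by blast
    show ?thesis by (rule canc_distrib) (rule koszul_canc[OF F])
  qed
  show ?thesis using DP PE ED by blast
qed


end
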